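(* Let $I$ be a regular and $\mathcal{H}$-positively-homogeneous conditional indicator w.r.t. $\mathcal{H}$. Then for all $X\in\mathbb{D}_I$ and $h\in\mathbb{L}^0(\mathbb{R},\mathcal{H})$, $$I(hX)=h^+I(X)+h^-I(-X),$$ where $h^+=\max(h,0)$ and $h^-=\max(-h,0)$.
   Context: Let $(\Omega,\mathcal{F},\mathbb{P})$ be a probability space with $\mathcal{F}$ complete, and $\mathcal{H}\subseteq\mathcal{F}$ a complete sub-$\sigma$-algebra. $\overline{\mathbb{R}}=\mathbb{R}\cup\{\pm\infty\}$ with conventions $r\pm\infty=\pm\infty$, $\infty-\infty=0$, $\infty+\infty=\infty$, $0\times(\pm\infty)=0$; $\mathbb{L}^0(G,\mathcal{G})$ is the set of $\mathcal{G}$-measurable random variables a.s. valued in $G$. $\operatorname{ess\,sup}_{\mathcal{H}}(X)$ is the smallest $\mathcal{H}$-measurable random variable dominating $X$ a.s., $\operatorname{ess\,inf}_{\mathcal{H}}(X)=-\operatorname{ess\,sup}_{\mathcal{H}}(-X)$. A conditional indicator w.r.t. $\mathcal{H}$ is a map $I:\mathbb{D}_I\to\mathbb{L}^0(\overline{\mathbb{R}},\mathcal{H})$, $0\in\mathbb{D}_I\subseteq\mathbb{L}^0(\overline{\mathbb{R}},\mathcal{F})$, with $I(X)\in[\operatorname{ess\,inf}_{\mathcal{H}}(X),\operatorname{ess\,sup}_{\mathcal{H}}(X)]$ a.s. and $\mathbb{D}_I+\mathbb{L}^0(\overline{\mathbb{R}},\mathcal{H})\subseteq\mathbb{D}_I$.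 $\mathbb{D}_I$ is $\mathcal{H}$-decomposable if $X1_H+Y1_{\Omega\setminus H}\in\mathbb{D}_I$ for all $X,Y\in\mathbb{D}_I$, $H\in\mathcal{H}$. $I$ is regular if $\mathbb{D}_I$ is $\mathcal{H}$-decomposable and for $X,Y\in\mathbb{D}_I$, $H\in\mathcal{H}$, $X1_H=Y1_H$ implies $I(X)1_H=I(Y)1_H$. $I$ is $\mathcal{H}$-positively-homogeneous if for every $\alpha\in\mathbb{L}^0(\mathbb{R}_+,\mathcal{H})$, $\alpha\mathbb{D}_I\subseteq\mathbb{D}_I$ and $I(\alpha X)=\alpha I(X)$ for $X\in\mathbb{D}_I$. *)

theory Defs
  imports "HOL-Probability.Probability"
begin

(* Addition on the extended reals with the paper's conventions:
   r +- oo = +-oo, oo + oo = oo, (-oo) + (-oo) = -oo, but oo - oo = 0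
   (Isabelle's ereal addition gives oo + (-oo) = oo, so we adjust that case). *)
definition epl :: "ereal \<Rightarrow> ereal \<Rightarrow> ereal" where
  "epl x y = (if (x = \<infinity> \<and> y = -\<infinity>) \<or> (x = -\<infinity> \<and> y = \<infinity>) then 0 else x + y)"

definition complete_sets :: "'a measure \<Rightarrow> bool" where
  "complete_sets M \<longleftrightarrow> (\<forall>N \<in> null_sets M. \<forall>A. A \<subseteq> N \<longrightarrow> A \<in> sets M)"

(* the sub-sigma-algebra H is complete (w.r.t. P): it contains all P-null sets
   (hence all subsets of them, since F is complete) *)
definition complete_sub :: "'a measure \<Rightarrow> 'a measure \<Rightarrow> bool" where
  "complete_sub M H \<longleftrightarrow> (\<forall>N \<in> null_sets M. \<forall>A. A \<subseteq> N \<longrightarrow> A \<in> sets H)"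

definition is_cond_ess_sup :: "'a measure \<Rightarrow> 'a measure \<Rightarrow> ('a \<Rightarrow> ereal) \<Rightarrow> ('a \<Rightarrow> ereal) \<Rightarrow> bool" where
  "is_cond_ess_sup M H X S \<longleftrightarrow>
     S \<in> borel_measurable H \<and> (AE \<omega> in M. X \<omega> \<le> S \<omega>) \<and>
     (\<forall>S' \<in> borel_measurable H. (AE \<omega> in M. X \<omega> \<le> S' \<omega>) \<longrightarrow> (AE \<omega> in M. S \<omega> \<le> S' \<omega>))"

definition cond_ess_sup :: "'a measure \<Rightarrow> 'a measure \<Rightarrow> ('a \<Rightarrow> ereal) \<Rightarrow> 'a \<Rightarrow> ereal" where
  "cond_ess_sup M H X = (SOME S. is_cond_ess_sup M H X S)"

definition cond_ess_inf :: "'a measure \<Rightarrow> 'a measure \<Rightarrow> ('a \<Rightarrow> ereal) \<Rightarrow> 'a \<Rightarrow> ereal" where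
  "cond_ess_inf M H X = (\<lambda>\<omega>. - cond_ess_sup M H (\<lambda>\<omega>. - X \<omega>) \<omega>)"

(* Random variables are
   represented by functions; since the paper works with a.s.-equivalence classes,
   D is closed under a.s. modification and I respects a.s. equality. *)
definition cond_indicator ::
  "'a measure \<Rightarrow> 'a measure \<Rightarrow> ('a \<Rightarrow> ereal) set \<Rightarrow> (('a \<Rightarrow> ereal) \<Rightarrow> 'a \<Rightarrow> ereal) \<Rightarrow> bool" where
  "cond_indicator M H D I \<longleftrightarrow>
     (\<lambda>_. 0) \<in> D \<and> D \<subseteq> borel_measurable M \<and>
     (\<forall>X \<in> D. \<forall>Y \<in> borel_measurable M. (AE \<omega> in M. X \<omega> = Y \<omega>) \<longrightarrow>
        Y \<in> D \<and> (AE \<omega> in M. I X \<omega> = I Y \<omega>)) \<and>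
     (\<forall>X \<in> D. I X \<in> borel_measurable H \<and>
        (AE \<omega> in M. cond_ess_inf M H X \<omega> \<le> I X \<omega> \<and> I X \<omega> \<le> cond_ess_sup M H X \<omega>)) \<and>
     (\<forall>X \<in> D. \<forall>Y \<in> borel_measurable H. (\<lambda>\<omega>. epl (X \<omega>) (Y \<omega>)) \<in> D)"

definition decomposable :: "'a measure \<Rightarrow> ('a \<Rightarrow> ereal) set \<Rightarrow> bool" where
  "decomposable H D \<longleftrightarrow>
     (\<forall>X \<in> D. \<forall>Y \<in> D. \<forall>A \<in> sets H. (\<lambda>\<omega>. if \<omega> \<in> A then X \<omega> else Y \<omega>) \<in> D)"

definition regular_ind ::
  "'a measure \<Rightarrow> 'a measure \<Rightarrow> ('a \<Rightarrow> ereal) set \<Rightarrow> (('a \<Rightarrow> ereal) \<Rightarrow> 'a \<Rightarrow> ereal) \<Rightarrow> bool" where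
  "regular_ind M H D I \<longleftrightarrow> decomposable H D \<and>
     (\<forall>X \<in> D. \<forall>Y \<in> D. \<forall>A \<in> sets H.
        (AE \<omega> in M. \<omega> \<in> A \<longrightarrow> X \<omega> = Y \<omega>) \<longrightarrow> (AE \<omega> in M. \<omega> \<in> A \<longrightarrow> I X \<omega> = I Y \<omega>))"

definition pos_homogeneous ::
  "'a measure \<Rightarrow> 'a measure \<Rightarrow> ('a \<Rightarrow> ereal) set \<Rightarrow> (('a \<Rightarrow> ereal) \<Rightarrow> 'a \<Rightarrow> ereal) \<Rightarrow> bool" where
  "pos_homogeneous M H D I \<longleftrightarrow>
     (\<forall>\<alpha> :: 'a \<Rightarrow> real. \<alpha> \<in> borel_measurable H \<longrightarrow> (AE \<omega> in M. 0 \<le> \<alpha> \<omega>) \<longrightarrow>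
       (\<forall>X \<in> D. (\<lambda>\<omega>. ereal (\<alpha> \<omega>) * X \<omega>) \<in> D \<and>
          (AE \<omega> in M. I (\<lambda>\<omega>. ereal (\<alpha> \<omega>) * X \<omega>) \<omega> = ereal (\<alpha> \<omega>) * I X \<omega>)))"

end

theory Submission
  imports Defs
begin

theorem mainTheorem6:
  fixes M H :: "'a measure"
    and D :: "('a \<Rightarrow> ereal) set"
    and I :: "('a \<Rightarrow> ereal) \<Rightarrow> 'a \<Rightarrow> ereal"
    and X :: "'a \<Rightarrow> ereal"
    and h :: "'a \<Rightarrow> real"
  assumes "prob_space M"
    and "complete_sets M"
    and "subalgebra M H"
    and "complete_sub M H"
    and "cond_indicator M H D I"
    and "regular_ind M H D I"
    and "pos_homogeneous M H D I"
    and "X \<in> D"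
    and "(\<lambda>\<omega>. - X \<omega>) \<in> D"
    and "h \<in> borel_measurable H"
  shows "AE \<omega> in M. I (\<lambda>\<omega>. ereal (h \<omega>) * X \<omega>) \<omega> =
           ereal (max (h \<omega>) 0) * I X \<omega> + ereal (max (- h \<omega>) 0) * I (\<lambda>\<omega>. - X \<omega>) \<omega>"
proof -
  let ?Z = "\<lambda>\<omega>. ereal (h \<omega>) * X \<omega>"
  let ?p = "\<lambda>\<omega>. max (h \<omega>) 0"
  let ?n = "\<lambda>\<omega>. max (- h \<omega>) 0"
  let ?Y1 = "\<lambda>\<omega>. ereal (?p \<omega>) * X \<omega>"
  let ?Y2 = "\<lambda>\<omega>. ereal (?n \<omega>) * - X \<omega>"
  define A where "A = {\<omega> \<in> space H. 0 \<le> h \<omega>}"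
  have sp: "space H = space M" using assms(3) by (simp add: subalgebra_def)
  have A: "A \<in> sets H" unfolding A_def using assms(10) by measurable
  have Ac: "space H - A \<in> sets H" using A by auto
  have pm: "?p \<in> borel_measurable H" using assms(10) by measurable
  have nm: "?n \<in> borel_measurable H" using assms(10) by measurable
  have pos: "\<And>\<alpha> Y. \<alpha> \<in> borel_measurable H \<Longrightarrow> (\<And>\<omega>. 0 \<le> \<alpha> \<omega>) \<Longrightarrow> Y \<in> D \<Longrightarrow>
      (\<lambda>\<omega>. ereal (\<alpha> \<omega>) * Y \<omega>) \<in> D \<and> (AE \<omega> in M. I (\<lambda>\<omega>. ereal (\<alpha> \<omega>) * Y \<omega>) \<omega> = ereal (\<alpha> \<omega>) * I Y \<omega>)"
  proof -
    fix \<alpha> :: "'a \<Rightarrow> real" and Y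
    assume "\<alpha> \<in> borel_measurable H" "\<And>\<omega>. 0 \<le> \<alpha> \<omega>" "Y \<in> D"
    then show "(\<lambda>\<omega>. ereal (\<alpha> \<omega>) * Y \<omega>) \<in> D \<and> (AE \<omega> in M. I (\<lambda>\<omega>. ereal (\<alpha> \<omega>) * Y \<omega>) \<omega> = ereal (\<alpha> \<omega>) * I Y \<omega>)"
      using assms(7) unfolding pos_homogeneous_def by blast
  qed
  have Y1: "?Y1 \<in> D" and E1: "AE \<omega> in M. I ?Y1 \<omega> = ereal (?p \<omega>) * I X \<omega>"
    using pos[OF pm _ assms(8)] by auto
  have Y2: "?Y2 \<in> D" and E2: "AE \<omega> in M. I ?Y2 \<omega> = ereal (?n \<omega>) * I (\<lambda>\<omega>. - X \<omega>) \<omega>"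
    using pos[OF nm _ assms(9)] by auto
  have dec: "decomposable H D" using assms(6) regular_ind_def by blast
  have W: "(\<lambda>\<omega>. if \<omega> \<in> A then ?Y1 \<omega> else ?Y2 \<omega>) \<in> D"
    using dec unfolding decomposable_def by (rule bspec[OF bspec[OF bspec[OF _ Y1] Y2] A])
  have eqW: "\<forall>\<omega>\<in>space M. (if \<omega> \<in> A then ?Y1 \<omega> else ?Y2 \<omega>) = ?Z \<omega>"
  proof
    fix \<omega> assume om: "\<omega> \<in> space M"
    show "(if \<omega> \<in> A then ?Y1 \<omega> else ?Y2 \<omega>) = ?Z \<omega>"
    proof (cases "0 \<le> h \<omega>")
      case True
      then show ?thesis using om sp unfolding A_def by (auto simp: max_def)
    next
      case False
      then have "ereal (?n \<omega>) * - X \<omega> = ereal (h \<omega>) * X \<omega>"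
      proof -
        have "ereal (?n \<omega>) = - ereal (h \<omega>)" using False by (simp add: max_def)
        then show ?thesis by (simp only: ereal_mult_minus_left ereal_mult_minus_right ereal_uminus_uminus)
      qed
      then show ?thesis using False unfolding A_def by auto
    qed
  qed
  have ci: "\<forall>X \<in> D. \<forall>Y \<in> borel_measurable M. (AE \<omega> in M. X \<omega> = Y \<omega>) \<longrightarrow> Y \<in> D \<and> (AE \<omega> in M. I X \<omega> = I Y \<omega>)"
    and DM: "D \<subseteq> borel_measurable M"
    using assms(5) unfolding cond_indicator_def by blast+
  have hM: "h \<in> borel_measurable M"
    by (rule measurable_from_subalg[OF assms(3) assms(10)])
  have XM: "X \<in> borel_measurable M" using assms(8) DM by auto
  have ZM: "?Z \<in> borel_measurable M"
    by (rule borel_measurable_ereal_times[OF borel_measurable_ereal[OF hM] XM])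
  have AEW: "AE \<omega> in M. (if \<omega> \<in> A then ?Y1 \<omega> else ?Y2 \<omega>) = ?Z \<omega>"
    using eqW by (rule AE_I2[OF bspec])
  have Z: "?Z \<in> D"
    using ci[rule_format, OF W ZM AEW] by (rule conjunct1)
  have reg: "\<forall>X\<in>D. \<forall>Y\<in>D. \<forall>B\<in>sets H. (AE \<omega> in M. \<omega> \<in> B \<longrightarrow> X \<omega> = Y \<omega>) \<longrightarrow> (AE \<omega> in M. \<omega> \<in> B \<longrightarrow> I X \<omega> = I Y \<omega>)"
    using assms(6) regular_ind_def by blast
  have R1: "AE \<omega> in M. \<omega> \<in> A \<longrightarrow> I ?Z \<omega> = I ?Y1 \<omega>"
  proof -
    have "AE \<omega> in M. \<omega> \<in> A \<longrightarrow> ?Z \<omega> = ?Y1 \<omega>"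
      by (rule AE_I2) (auto simp: A_def max_def)
    then show ?thesis by (rule reg[rule_format, OF Z Y1 A])
  qed
  have R2: "AE \<omega> in M. \<omega> \<in> space H - A \<longrightarrow> I ?Z \<omega> = I ?Y2 \<omega>"
  proof -
    have "AE \<omega> in M. \<omega> \<in> space H - A \<longrightarrow> ?Z \<omega> = ?Y2 \<omega>"
      using eqW by (intro AE_I2 impI) (metis DiffD2)
    then show ?thesis by (rule reg[rule_format, OF Z Y2 Ac])
  qed
  show ?thesis
  proof (rule AE_mp[OF AE_conjI[OF AE_conjI[OF R1 R2] AE_conjI[OF E1 E2]]], rule AE_I2, intro impI)
    fix \<omega> assume om: "\<omega> \<in> space M"
      and H: "((\<omega> \<in> A \<longrightarrow> I ?Z \<omega> = I ?Y1 \<omega>) \<and> (\<omega> \<in> space H - A \<longrightarrow> I ?Z \<omega> = I ?Y2 \<omega>)) \<and>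
        (I ?Y1 \<omega> = ereal (?p \<omega>) * I X \<omega>) \<and> (I ?Y2 \<omega> = ereal (?n \<omega>) * I (\<lambda>\<omega>. - X \<omega>) \<omega>)"
    show "I ?Z \<omega> = ereal (?p \<omega>) * I X \<omega> + ereal (?n \<omega>) * I (\<lambda>\<omega>. - X \<omega>) \<omega>"
    proof (cases "0 \<le> h \<omega>")
      case True
      then have "\<omega> \<in> A" using om sp A_def by auto
      then show ?thesis using H True by (simp add: max_def zero_ereal_def[symmetric])
    next
      case False
      then have "\<omega> \<in> space H - A" using om sp A_def by auto
      then show ?thesis using H False by (simp add: max_def zero_ereal_def[symmetric])
    qed
  qed
qed

end
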